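(* Let $G$ be a $(3,4)$-biregular $X,Y$-bigraph (multiple edges allowed) in which every vertex of $X$ has degree 3 and every vertex of $Y$ has degree 4, and let $P$ be a proper path-factor of $G$. Let $Q=G-E(P)$. Let $G_P$ be the graph whose vertex set is $\{x\in X : d_P(x)=2\}$, in which $x_i$ and $x_j$ are adjacent whenever (a) $x_i$ and $x_j$ are vertices of degree 2 in one component of $P$ that is a path of length 6, or (b) $x_i$ and $x_j$ are vertices of degree 2 at distance 4 in one component of $P$ that is a path of length 8, or (c) $x_i$ and $x_j$ are the vertices of degree 1 of one component of $Q$. Then $G_P$ is bipartite.
   Context: Graphs may have multiple edges. An $X,Y$-bigraph is a bipartite graph with partite sets $X$ and $Y$. A $(3,4)$-biregular bigraph is a bipartite graph in which every vertex of one part has degree 3 and every vertex of the other part has degree 4. A proper path-factor of a $(3,4)$-biregular $X,Y$-bigraph $G$ (with $X$ the degree-3 side) is a spanning subgraph of $G$ each of whose components is a path whose two endpoints lie in $X$ and whose length (number of edges) lies in $\{2,4,6,8\}$. $d_H(v)$ denotes the degree of $v$ in $H$. *)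

theory Defs
  imports Main
begin

text \<open>A multigraph bigraph: vertex parts X, Y; a set of edge identifiers E;
  each edge e has ends e = (x-end, y-end).  Multiple edges are allowed since
  distinct edge identifiers may have the same ends.\<close>

definition inc :: "('e \<Rightarrow> 'v \<times> 'v) \<Rightarrow> 'e \<Rightarrow> 'v \<Rightarrow> bool" where
  "inc ends e v \<longleftrightarrow> v = fst (ends e) \<or> v = snd (ends e)"

definition deg :: "('e \<Rightarrow> 'v \<times> 'v) \<Rightarrow> 'e set \<Rightarrow> 'v \<Rightarrow> nat" where
  "deg ends F v = card {e \<in> F. inc ends e v}"

definition joins :: "('e \<Rightarrow> 'v \<times> 'v) \<Rightarrow> 'e \<Rightarrow> 'v \<Rightarrow> 'v \<Rightarrow> bool" where
  "joins ends e u v \<longleftrightarrow> ends e = (u, v) \<or> ends e = (v, u)"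

definition adj :: "('e \<Rightarrow> 'v \<times> 'v) \<Rightarrow> 'e set \<Rightarrow> 'v \<Rightarrow> 'v \<Rightarrow> bool" where
  "adj ends F u v \<longleftrightarrow> (\<exists>e\<in>F. joins ends e u v)"

definition comp :: "('e \<Rightarrow> 'v \<times> 'v) \<Rightarrow> 'e set \<Rightarrow> 'v \<Rightarrow> 'v set" where
  "comp ends F v = {u. (adj ends F)\<^sup>*\<^sup>* v u}"

definition biregular34 :: "'v set \<Rightarrow> 'v set \<Rightarrow> 'e set \<Rightarrow> ('e \<Rightarrow> 'v \<times> 'v) \<Rightarrow> bool" where
  "biregular34 X Y E ends \<longleftrightarrow> finite X \<and> finite Y \<and> finite E \<and> X \<inter> Y = {} \<and>
     (\<forall>e\<in>E. fst (ends e) \<in> X \<and> snd (ends e) \<in> Y) \<and>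
     (\<forall>x\<in>X. deg ends E x = 3) \<and> (\<forall>y\<in>Y. deg ends E y = 4)"

text \<open>The component with vertex set C of the subgraph with edge set F is the path
  vs!0 -- es!0 -- vs!1 -- ... -- vs!k (length k = length es).\<close>
definition path_rep :: "('e \<Rightarrow> 'v \<times> 'v) \<Rightarrow> 'e set \<Rightarrow> 'v set \<Rightarrow> 'v list \<Rightarrow> 'e list \<Rightarrow> bool" where
  "path_rep ends F C vs es \<longleftrightarrow> length vs = Suc (length es) \<and> distinct vs \<and> distinct es \<and>
     set vs = C \<and> set es = {e \<in> F. \<exists>u\<in>C. inc ends e u} \<and>
     (\<forall>i<length es. joins ends (es ! i) (vs ! i) (vs ! Suc i))"

definition proper_path_factor ::
  "'v set \<Rightarrow> 'v set \<Rightarrow> 'e set \<Rightarrow> ('e \<Rightarrow> 'v \<times> 'v) \<Rightarrow> 'e set \<Rightarrow> bool" where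
  "proper_path_factor X Y E ends F \<longleftrightarrow> F \<subseteq> E \<and>
     (\<forall>v\<in>X \<union> Y. \<exists>vs es. path_rep ends F (comp ends F v) vs es \<and>
        length es \<in> {2, 4, 6, 8} \<and> hd vs \<in> X \<and> last vs \<in> X)"

definition GP_verts :: "'v set \<Rightarrow> ('e \<Rightarrow> 'v \<times> 'v) \<Rightarrow> 'e set \<Rightarrow> 'v set" where
  "GP_verts X ends F = {x \<in> X. deg ends F x = 2}"

text \<open>Adjacency of G_P; Q = G - E(P) has edge set E - F.\<close>
definition GP_adj :: "'v set \<Rightarrow> 'e set \<Rightarrow> ('e \<Rightarrow> 'v \<times> 'v) \<Rightarrow> 'e set \<Rightarrow> 'v \<Rightarrow> 'v \<Rightarrow> bool" where
  "GP_adj X E ends F xi xj \<longleftrightarrow>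
     xi \<in> GP_verts X ends F \<and> xj \<in> GP_verts X ends F \<and> xi \<noteq> xj \<and>
     ( (comp ends F xi = comp ends F xj \<and>
          (\<exists>vs es. path_rep ends F (comp ends F xi) vs es \<and> length es = 6))
     \<or> (\<exists>vs es i j. path_rep ends F (comp ends F xi) vs es \<and> length es = 8 \<and>
          i < length vs \<and> j < length vs \<and> vs ! i = xi \<and> vs ! j = xj \<and>
          (i = j + 4 \<or> j = i + 4))
     \<or> (comp ends (E - F) xi = comp ends (E - F) xj \<and>
          deg ends (E - F) xi = 1 \<and> deg ends (E - F) xj = 1))"

definition bipartite_on :: "'v set \<Rightarrow> ('v \<Rightarrow> 'v \<Rightarrow> bool) \<Rightarrow> bool" where
  "bipartite_on V R \<longleftrightarrow> (\<exists>A \<subseteq> V. \<forall>u\<in>V. \<forall>v\<in>V. R u v \<longrightarrow> (u \<in> A \<longleftrightarrow> v \<notin> A))"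

end

theory Submission
  imports Defs
begin


definition mt :: "'v set \<Rightarrow> ('v \<Rightarrow> 'v \<Rightarrow> bool) \<Rightarrow> bool" where
 "mt V R \<longleftrightarrow> (\<forall>u\<in>V. \<forall>v\<in>V. R u v \<longrightarrow> R v u \<and> u \<noteq> v) \<and>
    (\<forall>u\<in>V. \<forall>v\<in>V. \<forall>w\<in>V. R u v \<longrightarrow> R u w \<longrightarrow> v = w)"

lemma mt_mono: "mt V R \<Longrightarrow> V' \<subseteq> V \<Longrightarrow> mt V' R"
  unfolding mt_def by blast

lemma bip_step:
  fixes V :: "'v set"
  assumes IH: "\<And>(V'::'v set) R1' R2'. card V' < card V \<Longrightarrow> finite V' \<Longrightarrow> mt V' R1' \<Longrightarrow> mt V' R2' \<Longrightarrow>
      bipartite_on V' (\<lambda>u v. R1' u v \<or> R2' u v)"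
    and fin: "finite V" and m1: "mt V R1" and m2: "mt V R2" and ab: "a \<in> V" "b \<in> V" "R2 a b"
  shows "bipartite_on V (\<lambda>u v. R1 u v \<or> R2 u v)"
proof -
  have s1: "\<And>u v. u\<in>V \<Longrightarrow> v\<in>V \<Longrightarrow> R1 u v \<Longrightarrow> R1 v u \<and> u \<noteq> v"
   and f1: "\<And>u v w. u\<in>V \<Longrightarrow> v\<in>V \<Longrightarrow> w\<in>V \<Longrightarrow> R1 u v \<Longrightarrow> R1 u w \<Longrightarrow> v = w"
    using m1 unfolding mt_def by blast+
  have s2: "\<And>u v. u\<in>V \<Longrightarrow> v\<in>V \<Longrightarrow> R2 u v \<Longrightarrow> R2 v u \<and> u \<noteq> v"
   and f2: "\<And>u v w. u\<in>V \<Longrightarrow> v\<in>V \<Longrightarrow> w\<in>V \<Longrightarrow> R2 u v \<Longrightarrow> R2 u w \<Longrightarrow> v = w"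
    using m2 unfolding mt_def by blast+
  have anb: "a \<noteq> b" using s2 ab by blast
  define V' where "V' = V - {a,b}"
  define R1' where "R1' = (\<lambda>u v. (R1 u v \<and> u \<notin> {a,b} \<and> v \<notin> {a,b}) \<or> (R1 u a \<and> R1 v b) \<or> (R1 u b \<and> R1 v a))"
  have cV: "card V' < card V" unfolding V'_def using fin ab
    by (metis Diff_insert2 card_Diff2_less)
  have fV: "finite V'" using fin V'_def by simp
  have V'V: "V' \<subseteq> V" using V'_def by blast
  have mt1: "mt V' R1'"
    unfolding mt_def
  proof (intro conjI ballI impI)
    fix u v assume uv: "u \<in> V'" "v \<in> V'" "R1' u v"
    then show "R1' v u" unfolding R1'_def using s1 V'V by blast
    have "u \<in> V" using uv V'V by blast
    show "u \<noteq> v" using uv(3) unfolding R1'_def using s1[OF \<open>u \<in> V\<close> \<open>u \<in> V\<close>] f1[OF \<open>u \<in> V\<close> ab(1) ab(2)] anb by auto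
  next
    fix u v w assume uvw: "u \<in> V'" "v \<in> V'" "w \<in> V'" "R1' u v" "R1' u w"
    have V: "u \<in> V" "v \<in> V" "w \<in> V" and nab: "u \<notin> {a,b}" "v \<notin> {a,b}" "w \<notin> {a,b}"
      using uvw V'_def by auto
    have fu: "\<And>p q. p \<in> V \<Longrightarrow> q \<in> V \<Longrightarrow> R1 u p \<Longrightarrow> R1 u q \<Longrightarrow> p = q" using f1 V by blast
    have fa: "\<And>p q. p \<in> V \<Longrightarrow> q \<in> V \<Longrightarrow> R1 a p \<Longrightarrow> R1 a q \<Longrightarrow> p = q" using f1 ab by blast
    have fb: "\<And>p q. p \<in> V \<Longrightarrow> q \<in> V \<Longrightarrow> R1 b p \<Longrightarrow> R1 b q \<Longrightarrow> p = q" using f1 ab by blast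
    have sa: "R1 v a \<Longrightarrow> R1 a v" "R1 w a \<Longrightarrow> R1 a w" "R1 v b \<Longrightarrow> R1 b v" "R1 w b \<Longrightarrow> R1 b w"
      using s1 V ab by blast+
    show "v = w" using uvw(4,5) unfolding R1'_def
      using fu[OF V(2) ab(1)] fu[OF V(2) ab(2)] fu[OF V(3) ab(1)] fu[OF V(3) ab(2)] fu[OF ab(1) ab(2)] fu[OF V(2) V(3)]
        fa[OF V(2) V(3)] fb[OF V(2) V(3)] sa nab anb V by auto
  qed
  have mt2: "mt V' R2" using mt_mono[OF m2 V'V] .
  obtain A' where A': "A' \<subseteq> V'" "\<And>u v. u\<in>V' \<Longrightarrow> v\<in>V' \<Longrightarrow> R1' u v \<or> R2 u v \<Longrightarrow> (u \<in> A' \<longleftrightarrow> v \<notin> A')"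
  proof -
    have "bipartite_on V' (\<lambda>u v. R1' u v \<or> R2 u v)" by (rule IH) (use cV fV mt1 mt2 in auto)
    then show ?thesis using that unfolding bipartite_on_def by blast
  qed
  define pa where "pa = ((\<exists>a1\<in>V'. R1 a a1 \<and> a1 \<notin> A') \<or> (\<not>(\<exists>a1\<in>V'. R1 a a1) \<and> (\<exists>b1\<in>V'. R1 b b1 \<and> b1 \<in> A')))"
  define A where "A = A' \<union> (if pa then {a} else {b})"
  have abA': "a \<notin> A'" "b \<notin> A'" using A' V'_def by auto
  have inA: "\<And>u. u \<in> V' \<Longrightarrow> u \<in> A \<longleftrightarrow> u \<in> A'" unfolding A_def V'_def by auto
  have aA: "a \<in> A \<longleftrightarrow> pa" and bA: "b \<in> A \<longleftrightarrow> \<not> pa" unfolding A_def using abA' anb by auto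
  have H: "u \<in> A \<longleftrightarrow> v \<notin> A" if uv: "u \<in> V" "v \<in> V" "R1 u v \<or> R2 u v" "u \<in> {a,b}" for u v
  proof -
    have "u = a \<or> u = b" using uv by blast
    then show ?thesis
    proof
      assume ua: "u = a"
      show ?thesis
      proof (cases "v \<in> V'")
        case False
        then have "v = a \<or> v = b" using uv V'_def by blast
        then show ?thesis using ua aA bA uv s1 s2 by blast
      next
        case True
        then have vab: "v \<noteq> a" "v \<noteq> b" using V'_def by auto
        have "\<not> R2 a v" using f2 ab vab uv by blast
        then have r: "R1 a v" using uv ua by blast
        have "pa \<longleftrightarrow> v \<notin> A'" unfolding pa_def using r True f1 ab uv V'V by blast
        then show ?thesis using ua aA inA True by blast
      qed
    next
      assume ub: "u = b"
      show ?thesis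
      proof (cases "v \<in> V'")
        case False
        then have "v = a \<or> v = b" using uv V'_def by blast
        then show ?thesis using ub aA bA uv s1 s2 by blast
      next
        case True
        then have vab: "v \<noteq> a" "v \<noteq> b" using V'_def by auto
        have "\<not> R2 b v" using f2 s2 ab vab uv by blast
        then have r: "R1 b v" using uv ub by blast
        have "pa \<longleftrightarrow> v \<in> A'"
        proof (cases "\<exists>a1\<in>V'. R1 a a1")
          case True
          then obtain a1 where a1: "a1 \<in> V'" "R1 a a1" by blast
          have "R1' a1 v" unfolding R1'_def using a1 r s1 V'V ab uv by blast
          then have "a1 \<in> A' \<longleftrightarrow> v \<notin> A'" using A'(2) a1 \<open>v \<in> V'\<close> by blast
          moreover have "pa \<longleftrightarrow> a1 \<notin> A'" unfolding pa_def using a1 f1 ab V'V by blast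
          ultimately show ?thesis by blast
        next
          case False
          then show ?thesis unfolding pa_def using r \<open>v \<in> V'\<close> f1 ab uv V'V by blast
        qed
        then show ?thesis using ub bA inA True by blast
      qed
    qed
  qed
  show ?thesis unfolding bipartite_on_def
  proof (intro exI[of _ A] conjI ballI impI)
    show "A \<subseteq> V" unfolding A_def using A' V'V ab by auto
  next
    fix u v assume uv: "u \<in> V" "v \<in> V" "R1 u v \<or> R2 u v"
    show "u \<in> A \<longleftrightarrow> v \<notin> A"
    proof (cases "u \<in> {a,b}")
      case True then show ?thesis using H uv by blast
    next
      case uF: False
      show ?thesis
      proof (cases "v \<in> {a,b}")
        case True
        have "R1 v u \<or> R2 v u" using uv s1 s2 by blast
        then have "v \<in> A \<longleftrightarrow> u \<notin> A" using H uv True by blast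
        then show ?thesis by blast
      next
        case False
        then have "u \<in> V'" "v \<in> V'" using uF uv V'_def by auto
        moreover have "R1' u v \<or> R2 u v" using uv uF False unfolding R1'_def by blast
        ultimately show ?thesis using A'(2) inA by blast
      qed
    qed
  qed
qed

lemma bip_match:
  fixes V :: "'v set"
  shows "finite V \<Longrightarrow> mt V R1 \<Longrightarrow> mt V R2 \<Longrightarrow> bipartite_on V (\<lambda>u v. R1 u v \<or> R2 u v)"
proof (induction "card V" arbitrary: V R1 R2 rule: less_induct)
  case less
  have IH: "bipartite_on V' (\<lambda>u v. R1' u v \<or> R2' u v)"
    if "card V' < card V" "finite V'" "mt V' R1'" "mt V' R2'" for V' :: "'v set" and R1' R2'
    using less.hyps[OF that(1)] that(2-4) .
  show ?case
  proof (cases "\<exists>a\<in>V. \<exists>b\<in>V. R2 a b")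
    case True
    then obtain a b where ab: "a \<in> V" "b \<in> V" "R2 a b" by blast
    show ?thesis by (rule bip_step[OF IH less.prems ab]) 
  next
    case F2: False
    show ?thesis
    proof (cases "\<exists>a\<in>V. \<exists>b\<in>V. R1 a b")
      case True
      then obtain a b where ab: "a \<in> V" "b \<in> V" "R1 a b" by blast
      have "bipartite_on V (\<lambda>u v. R2 u v \<or> R1 u v)"
        by (rule bip_step[OF IH less.prems(1) less.prems(3) less.prems(2) ab])
      moreover have "(\<lambda>u v. R2 u v \<or> R1 u v) = (\<lambda>u v. R1 u v \<or> R2 u v)" by auto
      ultimately show ?thesis by simp
    next
      case False
      then show ?thesis using F2 unfolding bipartite_on_def by (intro exI[of _ "{}"]) auto
    qed
  qed
qed



lemma joins_sym: "joins ends e u v = joins ends e v u" unfolding joins_def by auto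
lemma adj_sym: "adj ends F u v = adj ends F v u" unfolding adj_def joins_def by auto
lemma inc_joins: "inc ends e v \<longleftrightarrow> (\<exists>t. joins ends e v t)"
  unfolding inc_def joins_def by (cases "ends e") auto
lemma comp_self: "v \<in> comp ends F v" unfolding comp_def by simp

lemma comp_eq:
  assumes "y \<in> comp ends F x" shows "comp ends F y = comp ends F x"
proof -
  have r: "(adj ends F)\<^sup>*\<^sup>* x y" using assms unfolding comp_def by simp
  have cv: "(adj ends F)\<inverse>\<inverse> = adj ends F" using adj_sym[of ends F] by (auto simp: fun_eq_iff)
  have r2: "(adj ends F)\<^sup>*\<^sup>* y x" using rtranclp_converseI[of "adj ends F" x y] r cv by simp
  show ?thesis unfolding comp_def using r r2 by (auto intro: rtranclp_trans)
qed

lemma path_repD: assumes "path_rep ends F C vs es"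
  shows "length vs = Suc (length es)" "distinct vs" "distinct es" "set vs = C"
    "set es = {e \<in> F. \<exists>u\<in>C. inc ends e u}"
    "\<And>i. i<length es \<Longrightarrow> joins ends (es!i) (vs!i) (vs!Suc i)"
  using assms unfolding path_rep_def by simp_all

lemma path_nb:
  assumes P: "path_rep ends F C vs es" and e: "e \<in> F" and p: "p < length vs"
    and j: "joins ends e (vs!p) t"
  shows "\<exists>k<length es. e = es!k \<and> ((k = p \<and> t = vs!Suc p) \<or> (Suc k = p \<and> t = vs!k))"
proof -
  have "vs!p \<in> C" using path_repD(4)[OF P] p by auto
  moreover have "inc ends e (vs!p)" using j inc_joins[of ends e "vs!p"] by auto
  moreover have "set es = {e \<in> F. \<exists>u\<in>C. inc ends e u}" using path_repD(5)[OF P] .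
  ultimately have "e \<in> set es" using e by auto
  then obtain k where k: "k < length es" "e = es!k" by (auto simp: in_set_conv_nth)
  have jk: "joins ends e (vs!k) (vs!Suc k)" using path_repD(6)[OF P] k by auto
  have d: "distinct vs" and l: "length vs = Suc (length es)" using path_repD[OF P] by auto
  have "(vs!p = vs!k \<and> t = vs!Suc k) \<or> (vs!p = vs!Suc k \<and> t = vs!k)"
    using j jk unfolding joins_def by auto
  then have "(p = k \<and> t = vs!Suc k) \<or> (p = Suc k \<and> t = vs!k)"
    using nth_eq_iff_index_eq[OF d] p k l by auto
  then show ?thesis using k by auto
qed

lemma path_inc_set:
  assumes P: "path_rep ends F C vs es" and p: "p < length vs"
  shows "{e\<in>F. inc ends e (vs!p)} = (\<lambda>k. es!k) ` {k. k < length es \<and> (k = p \<or> Suc k = p)}"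
proof
  show "{e\<in>F. inc ends e (vs!p)} \<subseteq> (\<lambda>k. es!k) ` {k. k < length es \<and> (k = p \<or> Suc k = p)}"
  proof
    fix e assume "e \<in> {e\<in>F. inc ends e (vs!p)}"
    then obtain t where "e \<in> F" "joins ends e (vs!p) t" using inc_joins[of ends e "vs!p"] by auto
    from path_nb[OF P this(1) p this(2)] show "e \<in> (\<lambda>k. es!k) ` {k. k < length es \<and> (k = p \<or> Suc k = p)}"
      by auto
  qed
next
  show "(\<lambda>k. es!k) ` {k. k < length es \<and> (k = p \<or> Suc k = p)} \<subseteq> {e\<in>F. inc ends e (vs!p)}"
  proof
    fix e assume "e \<in> (\<lambda>k. es!k) ` {k. k < length es \<and> (k = p \<or> Suc k = p)}"
    then obtain k where k: "k < length es" "k = p \<or> Suc k = p" "e = es!k" by blast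
    have "e \<in> set es" using k by auto
    then have "e \<in> F" using path_repD(5)[OF P] by auto
    moreover have "joins ends e (vs!k) (vs!Suc k)" using path_repD(6)[OF P] k by auto
    then have "inc ends e (vs!p)" using k unfolding inc_def joins_def by auto
    ultimately show "e \<in> {e\<in>F. inc ends e (vs!p)}" by blast
  qed
qed

lemma card_idx:
  assumes "0 < n" "p \<le> n"
  shows "card {k. k < (n::nat) \<and> (k = p \<or> Suc k = p)} = (if p = 0 \<or> p = n then 1 else 2)"
proof (cases "p = 0")
  case True
  then have "{k. k < n \<and> (k = p \<or> Suc k = p)} = {0}" using assms by auto
  then show ?thesis using True by simp
next
  case F: False
  show ?thesis
  proof (cases "p = n")
    case True
    then have "{k. k < n \<and> (k = p \<or> Suc k = p)} = {p - 1}" using assms F by auto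
    then show ?thesis using True by simp
  next
    case False
    then have "{k. k < n \<and> (k = p \<or> Suc k = p)} = {p - 1, p}" using assms F by auto
    then show ?thesis using F False by simp
  qed
qed

lemma path_deg:
  assumes P: "path_rep ends F C vs es" and n: "0 < length es" and p: "p \<le> length es"
  shows "deg ends F (vs!p) = (if p = 0 \<or> p = length es then 1 else 2)"
proof -
  have l: "length vs = Suc (length es)" and d: "distinct es" using path_repD[OF P] by auto
  have "inj_on (nth es) {k. k < length es \<and> (k = p \<or> Suc k = p)}"
    by (rule inj_on_nth[OF d]) auto
  then have "deg ends F (vs!p) = card {k. k < length es \<and> (k = p \<or> Suc k = p)}"
    unfolding deg_def using path_inc_set[OF P] p l by (simp add: card_image)
  then show ?thesis using card_idx[OF n p] by simp
qed

lemma rep_card: "path_rep ends F C vs es \<Longrightarrow> card C = Suc (length es)"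
  using path_repD(1,2,4) distinct_card by metis



lemma fin_deg_pos:
  assumes "finite F" shows "finite {u. deg ends F u = 1}"
proof -
  have "{u. deg ends F u = 1} \<subseteq> fst ` ends ` F \<union> snd ` ends ` F"
  proof
    fix u assume "u \<in> {u. deg ends F u = 1}"
    then have "card {e \<in> F. inc ends e u} = 1" unfolding deg_def by simp
    then have "{e \<in> F. inc ends e u} \<noteq> {}" by (metis card.empty zero_neq_one)
    then obtain e where "e \<in> F" "inc ends e u" by blast
    then show "u \<in> fst ` ends ` F \<union> snd ` ends ` F" unfolding inc_def by auto
  qed
  moreover have "finite (fst ` ends ` F \<union> snd ` ends ` F)" using assms by simp
  ultimately show ?thesis by (rule finite_subset)
qed

lemma leaves:
  fixes ends :: "'e \<Rightarrow> 'v \<times> 'v" and F :: "'e set"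
  assumes "finite F" "\<forall>e\<in>F. fst (ends e) \<noteq> snd (ends e)" "\<forall>u. deg ends F u \<le> 2"
  shows "card {u \<in> comp ends F v. deg ends F u = 1} \<le> 2"
  using assms
proof (induction "card F" arbitrary: F v rule: less_induct)
  case less
  note fin = less.prems(1) and nl = less.prems(2) and d2 = less.prems(3)
  define L where "L = {u \<in> comp ends F v. deg ends F u = 1}"
  show ?case
  proof (cases "L = {}")
    case True then show ?thesis unfolding L_def by (simp only:) simp
  next
    case False
    then obtain x where xL: "x \<in> L" by blast
    have dx: "deg ends F x = 1" and xc: "x \<in> comp ends F v" using xL L_def by auto
    obtain e0 where e0: "{e \<in> F. inc ends e x} = {e0}"
      using dx unfolding deg_def by (metis card_1_singletonE)
    have e0F: "e0 \<in> F" and ix: "inc ends e0 x" using e0 by auto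
    define w where "w = (if fst (ends e0) = x then snd (ends e0) else fst (ends e0))"
    have jw: "joins ends e0 x w" using ix unfolding w_def joins_def inc_def by (cases "ends e0") auto
    have xw: "x \<noteq> w" using jw nl e0F unfolding joins_def by auto
    have inc0: "\<And>u. inc ends e0 u \<longleftrightarrow> u = x \<or> u = w" using jw unfolding joins_def inc_def by auto
    have jx: "\<And>t. joins ends e0 x t \<Longrightarrow> t = w" using jw xw unfolding joins_def by auto
    have jany: "\<And>a b. joins ends e0 a b \<Longrightarrow> (a = x \<and> b = w) \<or> (a = w \<and> b = x)"
      using jw unfolding joins_def by auto
    define F' where "F' = F - {e0}"
    have cF: "card F' < card F" unfolding F'_def using card_Diff1_less[OF fin e0F] .
    have finF': "finite F'" using fin F'_def by simp
    have incF': "\<And>u. {e \<in> F'. inc ends e u} = {e \<in> F. inc ends e u} - {e0}" unfolding F'_def by auto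
    have degsame: "\<And>u. u \<noteq> x \<Longrightarrow> u \<noteq> w \<Longrightarrow> deg ends F' u = deg ends F u"
      unfolding deg_def using incF' inc0 by (metis (no_types, lifting) Diff_empty Diff_insert0 mem_Collect_eq)
    have degw: "deg ends F' w = deg ends F w - 1"
    proof -
      have "e0 \<in> {e \<in> F. inc ends e w}" using e0F inc0 by auto
      moreover have "finite {e \<in> F. inc ends e w}" using fin by simp
      ultimately show ?thesis unfolding deg_def using incF'[of w] by (simp add: card_Diff_singleton)
    qed
    have degw1: "deg ends F w \<ge> 1"
    proof -
      have "e0 \<in> {e \<in> F. inc ends e w}" using e0F inc0 by auto
      moreover have "finite {e \<in> F. inc ends e w}" using fin by simp
      ultimately show ?thesis unfolding deg_def by (metis One_nat_def Suc_leI card_gt_0_iff empty_iff)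
    qed
    have cv: "comp ends F v = comp ends F x" using comp_eq[OF xc] by simp
    have reach: "b = x \<or> (adj ends F')\<^sup>*\<^sup>* w b" if "(adj ends F)\<^sup>*\<^sup>* x b" for b
      using that
    proof (induction rule: rtranclp_induct)
      case base then show ?case by simp
    next
      case (step b c)
      obtain e where e: "e \<in> F" "joins ends e b c" using step.hyps(2) unfolding adj_def by blast
      show ?case
      proof (cases "c = x")
        case True then show ?thesis by simp
      next
        case cx: False
        show ?thesis
        proof (cases "b = x")
          case True
          then have "inc ends e x" using e inc_joins by metis
          then have "e = e0" using e0 e(1) by blast
          then have "c = w" using jx e True by blast
          then show ?thesis by simp
        next
          case bx: False
          then have rb: "(adj ends F')\<^sup>*\<^sup>* w b" using step.IH by blast
          have "e \<noteq> e0"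
          proof
            assume "e = e0"
            then have "(b = x \<and> c = w) \<or> (b = w \<and> c = x)" using jany e by blast
            then show False using bx cx by blast
          qed
          then have "adj ends F' b c" unfolding adj_def F'_def using e by blast
          then show ?thesis using rb by (meson rtranclp.rtrancl_into_rtrancl)
        qed
      qed
    qed
    show ?thesis
    proof (cases "deg ends F w = 1")
      case True
      have ew: "{e \<in> F. inc ends e w} = {e0}"
      proof -
        obtain e1 where "{e \<in> F. inc ends e w} = {e1}" using True unfolding deg_def by (metis card_1_singletonE)
        moreover have "e0 \<in> {e \<in> F. inc ends e w}" using e0F inc0 by auto
        ultimately show ?thesis by auto
      qed
      have sub: "comp ends F x \<subseteq> {x, w}"
      proof
        fix b assume "b \<in> comp ends F x"
        then have "(adj ends F)\<^sup>*\<^sup>* x b" unfolding comp_def by simp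
        then show "b \<in> {x, w}"
        proof (induction rule: rtranclp_induct)
          case base then show ?case by simp
        next
          case (step b c)
          obtain e where e: "e \<in> F" "joins ends e b c" using step.hyps(2) unfolding adj_def by blast
          have "inc ends e b" using e inc_joins by metis
          then have "e = e0" using e0 ew e(1) step.IH by blast
          then show ?case using jany e by blast
        qed
      qed
      have "L \<subseteq> {x, w}" using sub cv unfolding L_def by blast
      then have "card L \<le> card {x, w}" by (simp add: card_mono)
      also have "\<dots> \<le> 2" by (simp add: card_insert_le_m1)
      finally show ?thesis unfolding L_def .
    next
      case False
      then have dw: "deg ends F w = 2" using degw1 d2 by (metis le_antisym not_less_eq_eq One_nat_def Suc_1)
      have dw': "deg ends F' w = 1" using degw dw by simp
      define L' where "L' = {u \<in> comp ends F' w. deg ends F' u = 1}"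
      have nl': "\<forall>e\<in>F'. fst (ends e) \<noteq> snd (ends e)" using nl F'_def by blast
      have d2': "\<forall>u. deg ends F' u \<le> 2"
      proof
        fix u
        have "deg ends F' u \<le> deg ends F u" unfolding deg_def using fin incF'
          by (metis (no_types, lifting) card_mono finite_Diff Diff_subset mem_Collect_eq rev_finite_subset subsetI)
        then show "deg ends F' u \<le> 2" using d2 by (meson le_trans)
      qed
      have cL': "card L' \<le> 2" unfolding L'_def using less.hyps[OF cF finF' nl' d2'] .
      have finL': "finite L'" unfolding L'_def using fin_deg_pos[OF finF', of ends] by (rule rev_finite_subset) auto
      have wL': "w \<in> L'" unfolding L'_def using dw' comp_self[of w ends F'] by blast
      have "L \<subseteq> insert x (L' - {w})"
      proof
        fix u assume uL: "u \<in> L"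
        show "u \<in> insert x (L' - {w})"
        proof (cases "u = x")
          case True then show ?thesis by simp
        next
          case ux: False
          have du: "deg ends F u = 1" and uc: "u \<in> comp ends F x" using uL cv L_def by auto
          have uw: "u \<noteq> w" using du dw by auto
          have "(adj ends F)\<^sup>*\<^sup>* x u" using uc unfolding comp_def by simp
          then have "(adj ends F')\<^sup>*\<^sup>* w u" using reach ux by blast
          moreover have "deg ends F' u = 1" using degsame[OF ux uw] du by simp
          ultimately show ?thesis unfolding L'_def comp_def using uw by blast
        qed
      qed
      then have "card L \<le> card (insert x (L' - {w}))" using finL' by (simp add: card_mono)
      also have "\<dots> \<le> Suc (card (L' - {w}))" by (simp add: card_insert_le_m1)
      also have "\<dots> = card L'" using finL' wL' by (simp add: card_Diff_singleton) (metis Suc_pred card_gt_0_iff empty_iff)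
      finally show ?thesis using cL' unfolding L_def by simp
    qed
  qed
qed



definition cn :: "('e \<Rightarrow> 'v \<times> 'v) \<Rightarrow> 'e set \<Rightarrow> 'v \<Rightarrow> 'v \<Rightarrow> bool" where
  "cn ends F u w \<longleftrightarrow> (\<exists>e1\<in>F. \<exists>e2\<in>F. \<exists>t. joins ends e1 u t \<and> joins ends e2 w t)"

lemma es_in_F: "path_rep ends F C vs es \<Longrightarrow> k < length es \<Longrightarrow> es!k \<in> F"
  using path_repD(5) nth_mem by fastforce

lemma cn_yes:
  assumes P: "path_rep ends F C vs es" and l: "length es = 8"
  shows "cn ends F (vs!2) (vs!4)" "cn ends F (vs!6) (vs!4)"
proof -
  have j: "\<And>i. i < 8 \<Longrightarrow> joins ends (es!i) (vs!i) (vs!Suc i)" using path_repD(6)[OF P] l by simp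
  have f: "\<And>i. i < 8 \<Longrightarrow> es!i \<in> F" using es_in_F[OF P] l by simp
  have "joins ends (es!2) (vs!2) (vs!3)" using j[of 2] by (simp add: numeral_eq_Suc)
  moreover have "joins ends (es!3) (vs!3) (vs!4)" using j[of 3] by (simp add: numeral_eq_Suc)
  then have "joins ends (es!3) (vs!4) (vs!3)" unfolding joins_def by auto
  ultimately show "cn ends F (vs!2) (vs!4)" unfolding cn_def using f[of 2] f[of 3] by auto
  have "joins ends (es!5) (vs!5) (vs!6)" using j[of 5] by (simp add: numeral_eq_Suc)
  then have "joins ends (es!5) (vs!6) (vs!5)" unfolding joins_def by auto
  moreover have "joins ends (es!4) (vs!4) (vs!5)" using j[of 4] by (simp add: numeral_eq_Suc)
  ultimately show "cn ends F (vs!6) (vs!4)" unfolding cn_def using f[of 4] f[of 5] by auto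
qed

lemma cn_no:
  assumes P: "path_rep ends F C vs es" and l: "length es = 8"
  shows "\<not> cn ends F (vs!2) (vs!6)" "\<not> cn ends F (vs!6) (vs!2)"
proof -
  have d: "distinct vs" and lv: "length vs = 9" using path_repD(1,2)[OF P] l by auto
  have n1: "\<And>e t. e \<in> F \<Longrightarrow> joins ends e (vs!2) t \<Longrightarrow> t = vs!1 \<or> t = vs!3"
  proof -
    fix e t assume "e \<in> F" "joins ends e (vs!2) t"
    from path_nb[OF P this(1) _ this(2)] lv show "t = vs!1 \<or> t = vs!3"
      by (auto simp: numeral_eq_Suc)
  qed
  have n2: "\<And>e t. e \<in> F \<Longrightarrow> joins ends e (vs!6) t \<Longrightarrow> t = vs!5 \<or> t = vs!7"
  proof -
    fix e t assume "e \<in> F" "joins ends e (vs!6) t"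
    from path_nb[OF P this(1) _ this(2)] lv show "t = vs!5 \<or> t = vs!7"
      by (auto simp: numeral_eq_Suc)
  qed
  have ne: "vs!1 \<noteq> vs!5" "vs!1 \<noteq> vs!7" "vs!3 \<noteq> vs!5" "vs!3 \<noteq> vs!7"
    using nth_eq_iff_index_eq[OF d] lv by auto
  show "\<not> cn ends F (vs!2) (vs!6)" unfolding cn_def using n1 n2 ne by metis
  show "\<not> cn ends F (vs!6) (vs!2)" unfolding cn_def using n1 n2 ne by metis
qed

definition A6 where "A6 ends F x y \<longleftrightarrow> comp ends F x = comp ends F y \<and>
          (\<exists>vs es. path_rep ends F (comp ends F x) vs es \<and> length es = 6)"
definition B8 where "B8 ends F x y \<longleftrightarrow> (\<exists>vs es i j. path_rep ends F (comp ends F x) vs es \<and> length es = 8 \<and>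
          i < length vs \<and> j < length vs \<and> vs ! i = x \<and> vs ! j = y \<and>
          (i = j + 4 \<or> j = i + 4))"
definition Cq where "Cq E ends F x y \<longleftrightarrow> comp ends (E - F) x = comp ends (E - F) y \<and>
          deg ends (E - F) x = 1 \<and> deg ends (E - F) y = 1"

context
  fixes X Y :: "'v set" and E F :: "'e set" and ends :: "'e \<Rightarrow> 'v \<times> 'v"
  assumes Bi: "biregular34 X Y E ends" and PF: "proper_path_factor X Y E ends F"
begin

lemma finE: "finite E" and finX: "finite X" and disj: "X \<inter> Y = {}"
  and eXY: "e \<in> E \<Longrightarrow> fst (ends e) \<in> X \<and> snd (ends e) \<in> Y"
  and degEX: "x \<in> X \<Longrightarrow> deg ends E x = 3" and degEY: "y \<in> Y \<Longrightarrow> deg ends E y = 4"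
  using Bi unfolding biregular34_def by auto

lemma FE: "F \<subseteq> E" using PF unfolding proper_path_factor_def by simp
lemma finF: "finite F" using FE finE finite_subset by auto

lemma ppf_rep: "v \<in> X \<union> Y \<Longrightarrow> \<exists>vs es. path_rep ends F (comp ends F v) vs es \<and>
    length es \<in> {2,4,6,8} \<and> hd vs \<in> X \<and> last vs \<in> X"
  using PF unfolding proper_path_factor_def by blast

lemma memrep: "path_rep ends F C vs es \<Longrightarrow> u \<in> C \<Longrightarrow> \<exists>p \<le> length es. u = vs!p"
  using path_repD(1,4) by (metis in_set_conv_nth less_Suc_eq_le)

lemma degF: assumes "v \<in> X \<union> Y"
  shows "(deg ends F v = 1 \<longrightarrow> v \<in> X) \<and> 1 \<le> deg ends F v \<and> deg ends F v \<le> 2"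
proof -
  obtain vs es where R: "path_rep ends F (comp ends F v) vs es" and l: "length es \<in> {2,4,6,8}"
    and h: "hd vs \<in> X" "last vs \<in> X" using ppf_rep[OF assms] by blast
  obtain p where p: "p \<le> length es" "v = vs!p" using memrep[OF R comp_self] by blast
  have n: "0 < length es" using l by auto
  have lv: "length vs = Suc (length es)" using path_repD(1)[OF R] .
  have dv: "deg ends F v = (if p = 0 \<or> p = length es then 1 else 2)" using path_deg[OF R n p(1)] p(2) by simp
  have "hd vs = vs!0" using lv by (cases vs) auto
  moreover have "last vs = vs!length es" using lv last_conv_nth[of vs] by (cases vs) auto
  ultimately have "deg ends F v = 1 \<longrightarrow> v \<in> X" using dv p h by auto
  then show ?thesis using dv by auto
qed

lemma degFY: "v \<in> Y \<Longrightarrow> deg ends F v = 2"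
  using degF[of v] disj by (metis IntI UnI2 empty_iff le_antisym not_less_eq_eq One_nat_def Suc_1)

lemma joinsXY: assumes "e \<in> E" "joins ends e a b" shows "(a \<in> X \<and> b \<in> Y) \<or> (a \<in> Y \<and> b \<in> X)"
proof -
  have "fst (ends e) \<in> X" "snd (ends e) \<in> Y" using eXY[OF assms(1)] by auto
  then show ?thesis using assms(2) unfolding joins_def by auto
qed

lemma rep0X: assumes R: "path_rep ends F C vs es" and n: "0 < length es" shows "vs!0 \<in> X"
proof -
  have "es!0 \<in> E" using es_in_F[OF R n] FE by auto
  moreover have "joins ends (es!0) (vs!0) (vs!Suc 0)" using path_repD(6)[OF R n] by simp
  ultimately have "vs!0 \<in> X \<union> Y" using joinsXY by blast
  moreover have "deg ends F (vs!0) = 1" using path_deg[OF R n] by simp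
  ultimately show ?thesis using degF by blast
qed

lemma parity: assumes R: "path_rep ends F C vs es" and h: "vs!0 \<in> X"
  shows "i \<le> length es \<Longrightarrow> (vs!i \<in> X \<longleftrightarrow> even i)"
proof (induction i)
  case 0 then show ?case using h by simp
next
  case (Suc i)
  then have i: "i < length es" by simp
  have "es!i \<in> E" using es_in_F[OF R i] FE by auto
  moreover have "joins ends (es!i) (vs!i) (vs!Suc i)" using path_repD(6)[OF R i] by simp
  ultimately have "(vs!i \<in> X \<and> vs!Suc i \<in> Y) \<or> (vs!i \<in> Y \<and> vs!Suc i \<in> X)" using joinsXY by blast
  then have "vs!Suc i \<in> X \<longleftrightarrow> vs!i \<notin> X" using disj by blast
  then show ?case using Suc i by simp
qed

lemma posX: assumes R: "path_rep ends F C vs es" and n: "0 < length es" and p: "p \<le> length es"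
  and x: "vs!p \<in> X" and d: "deg ends F (vs!p) = 2"
  shows "even p \<and> 0 < p \<and> p < length es"
proof -
  have "even p" using parity[OF R rep0X[OF R n] p] x by simp
  moreover have "p \<noteq> 0 \<and> p \<noteq> length es" using path_deg[OF R n p] d by (auto split: if_splits)
  ultimately show ?thesis using p by auto
qed

lemma degQ_eq: "deg ends (E - F) v = deg ends E v - deg ends F v"
proof -
  have "{e \<in> E - F. inc ends e v} = {e \<in> E. inc ends e v} - {e \<in> F. inc ends e v}" using FE by auto
  moreover have "{e \<in> F. inc ends e v} \<subseteq> {e \<in> E. inc ends e v}" using FE by auto
  moreover have "finite {e \<in> F. inc ends e v}" using finF by simp
  ultimately show ?thesis unfolding deg_def by (simp add: card_Diff_subset)
qed

lemma degQ: "deg ends (E - F) v \<le> 2"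
proof (cases "v \<in> X \<union> Y")
  case True
  then show ?thesis
  proof
    assume "v \<in> X" then show ?thesis using degQ_eq degEX degF[of v] by auto
  next
    assume "v \<in> Y" then show ?thesis using degQ_eq degEY degFY by auto
  qed
next
  case False
  then have "{e \<in> E. inc ends e v} = {}" using eXY unfolding inc_def by auto
  then have "deg ends E v = 0" unfolding deg_def by (simp only: card.empty)
  then show ?thesis using degQ_eq[of v] by simp
qed

lemma noloopQ: "\<forall>e\<in>E - F. fst (ends e) \<noteq> snd (ends e)"
proof
  fix e assume "e \<in> E - F"
  then have "fst (ends e) \<in> X" "snd (ends e) \<in> Y" using eXY by auto
  then show "fst (ends e) \<noteq> snd (ends e)" using disj by auto
qed


lemma bip_mono: assumes "bipartite_on V R" and "\<And>u v. R' u v \<Longrightarrow> R u v" shows "bipartite_on V R'"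
proof -
  obtain A where A: "A \<subseteq> V" "\<forall>u\<in>V. \<forall>v\<in>V. R u v \<longrightarrow> (u \<in> A \<longleftrightarrow> v \<notin> A)"
    using assms(1) unfolding bipartite_on_def by (elim exE conjE) (rule that)
  have "\<forall>u\<in>V. \<forall>v\<in>V. R' u v \<longrightarrow> (u \<in> A \<longleftrightarrow> v \<notin> A)"
  proof (intro ballI impI)
    fix u v assume "u \<in> V" "v \<in> V" "R' u v"
    then show "u \<in> A \<longleftrightarrow> v \<notin> A" using A(2) assms(2) by simp
  qed
  then show ?thesis unfolding bipartite_on_def using A(1) by (intro exI[of _ A] conjI)
qed

lemma ar6: "even (p::nat) \<Longrightarrow> 0 < p \<Longrightarrow> p < 6 \<Longrightarrow> p = 2 \<or> p = 4" by presburger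
lemma ar8: "even (p::nat) \<Longrightarrow> 0 < p \<Longrightarrow> p < 8 \<Longrightarrow> p = 2 \<or> p = 4 \<or> p = 6" by presburger
lemma ar8b: "even (i::nat) \<Longrightarrow> 0 < i \<Longrightarrow> i < 8 \<Longrightarrow> even (j::nat) \<Longrightarrow> 0 < j \<Longrightarrow> j < 8 \<Longrightarrow>
   i = j + 4 \<or> j = i + 4 \<Longrightarrow> (i = 2 \<and> j = 6) \<or> (i = 6 \<and> j = 2)" by presburger

lemma inrep:
  assumes R: "path_rep ends F C vs es" and n: "0 < length es" and u: "u \<in> C" and uv: "u \<in> GP_verts X ends F"
  shows "\<exists>p. u = vs!p \<and> even p \<and> 0 < p \<and> p < length es"
proof -
  obtain p where p: "p \<le> length es" "u = vs!p" using memrep[OF R u] by blast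
  have "u \<in> X" "deg ends F u = 2" using uv unfolding GP_verts_def by auto
  then show ?thesis using posX[OF R n p(1)] p by auto
qed

lemma A6_D: assumes "A6 ends F u v"
  shows "\<exists>vs es. path_rep ends F (comp ends F u) vs es \<and> length es = 6 \<and> v \<in> comp ends F u"
  using assms unfolding A6_def apply (elim conjE exE) by (metis comp_self)

lemma B8_D: assumes "B8 ends F u v" and "u \<in> GP_verts X ends F" "v \<in> GP_verts X ends F"
  shows "\<exists>vs es. path_rep ends F (comp ends F u) vs es \<and> length es = 8 \<and> v \<in> comp ends F u \<and>
     ((u = vs!2 \<and> v = vs!6) \<or> (u = vs!6 \<and> v = vs!2))"
proof -
  obtain vs es i j where R: "path_rep ends F (comp ends F u) vs es" and l: "length es = 8"
    and ij: "i < length vs" "j < length vs" "vs!i = u" "vs!j = v" "i = j + 4 \<or> j = i + 4"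
    using assms(1) unfolding B8_def by blast
  have lv: "length vs = 9" using path_repD(1)[OF R] l by simp
  have vc: "v \<in> comp ends F u" using ij path_repD(4)[OF R] nth_mem by blast
  have uc: "u \<in> comp ends F u" using comp_self by metis
  have ux: "u \<in> X" "deg ends F u = 2" "v \<in> X" "deg ends F v = 2" using assms(2,3) unfolding GP_verts_def by auto
  have pi: "even i \<and> 0 < i \<and> i < 8" using posX[OF R _ _ _ ux(2)[folded ij(3)]] ij ux lv l by auto
  have pj: "even j \<and> 0 < j \<and> j < 8" using posX[OF R _ _ _ ux(4)[folded ij(4)]] ij ux lv l by auto
  have "(i = 2 \<and> j = 6) \<or> (i = 6 \<and> j = 2)" using ar8b pi pj ij(5) by blast
  then show ?thesis using R l vc ij by auto
qed

lemma B8_sym: assumes "B8 ends F u v" shows "B8 ends F v u"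
proof -
  obtain vs es i j where R: "path_rep ends F (comp ends F u) vs es" and l: "length es = 8"
    and ij: "i < length vs" "j < length vs" "vs!i = u" "vs!j = v" "i = j + 4 \<or> j = i + 4"
    using assms(1) unfolding B8_def by blast
  have vc: "v \<in> comp ends F u" using ij path_repD(4)[OF R] nth_mem by blast
  have "comp ends F v = comp ends F u" using comp_eq[OF vc] .
  then show ?thesis unfolding B8_def using R l ij by (intro exI[of _ vs] exI[of _ es] exI[of _ j] exI[of _ i]) auto
qed

lemma no68: "path_rep ends F C vs es \<Longrightarrow> length es = 6 \<Longrightarrow> path_rep ends F C vs' es' \<Longrightarrow> length es' = 8 \<Longrightarrow> False"
proof -
  assume a: "path_rep ends F C vs es" "length es = 6" "path_rep ends F C vs' es'" "length es' = 8"
  have "card C = Suc (length es)" "card C = Suc (length es')" using rep_card a(1) a(3) by blast+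
  then show False using a(2,4) by simp
qed

lemma fun1:
  assumes V: "u \<in> GP_verts X ends F" "v \<in> GP_verts X ends F" "w \<in> GP_verts X ends F"
    and ne: "u \<noteq> v" "u \<noteq> w"
    and r1: "A6 ends F u v \<or> B8 ends F u v" and r2: "A6 ends F u w \<or> B8 ends F u w"
  shows "v = w"
proof -
  have uc: "u \<in> comp ends F u" using comp_self by metis
  show ?thesis
  proof (cases "A6 ends F u v")
    case True
    obtain vs es where R: "path_rep ends F (comp ends F u) vs es" and l: "length es = 6"
      and vc: "v \<in> comp ends F u" using A6_D[OF True] by blast
    have "A6 ends F u w"
    proof (rule ccontr)
      assume "\<not> A6 ends F u w"
      then have "B8 ends F u w" using r2 by blast
      then show False using B8_D[OF _ V(1,3)] no68[OF R l] by blast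
    qed
    then have wc: "w \<in> comp ends F u" using A6_D by blast
    obtain pu where pu: "u = vs!pu" "even pu \<and> 0 < pu \<and> pu < length es" using inrep[OF R _ uc V(1)] l by auto
    obtain pv where pv: "v = vs!pv" "even pv \<and> 0 < pv \<and> pv < length es" using inrep[OF R _ vc V(2)] l by auto
    obtain pw where pw: "w = vs!pw" "even pw \<and> 0 < pw \<and> pw < length es" using inrep[OF R _ wc V(3)] l by auto
    have "pu = 2 \<or> pu = 4" "pv = 2 \<or> pv = 4" "pw = 2 \<or> pw = 4" using ar6 pu pv pw l by auto
    then show ?thesis using pu pv pw ne by auto
  next
    case False
    then have b1: "B8 ends F u v" using r1 by blast
    obtain vs es where R: "path_rep ends F (comp ends F u) vs es" and l: "length es = 8"
      and vc: "v \<in> comp ends F u" and uv: "(u = vs!2 \<and> v = vs!6) \<or> (u = vs!6 \<and> v = vs!2)"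
      using B8_D[OF b1 V(1,2)] by blast
    have "B8 ends F u w"
    proof (rule ccontr)
      assume "\<not> B8 ends F u w"
      then have "A6 ends F u w" using r2 by blast
      then show False using A6_D no68 R l by metis
    qed
    then obtain vs' es' where R': "path_rep ends F (comp ends F u) vs' es'" and l': "length es' = 8"
      and wc: "w \<in> comp ends F u" and uw: "(u = vs'!2 \<and> w = vs'!6) \<or> (u = vs'!6 \<and> w = vs'!2)"
      using B8_D[OF _ V(1,3)] by blast
    have ncn: "\<not> cn ends F u w" using cn_no[OF R' l'] uw by auto
    obtain pw where pw: "w = vs!pw" "even pw \<and> 0 < pw \<and> pw < length es" using inrep[OF R _ wc V(3)] l by auto
    have "pw = 2 \<or> pw = 4 \<or> pw = 6" using ar8 pw l by auto
    moreover have "pw \<noteq> 4" using cn_yes[OF R l] ncn uv pw by auto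
    ultimately show ?thesis using uv pw ne by auto
  qed
qed

lemma mt1: "mt (GP_verts X ends F) (\<lambda>x y. x \<noteq> y \<and> (A6 ends F x y \<or> B8 ends F x y))"
proof -
  have S: "(v \<noteq> u \<and> (A6 ends F v u \<or> B8 ends F v u)) \<and> u \<noteq> v"
    if h: "u \<noteq> v \<and> (A6 ends F u v \<or> B8 ends F u v)" for u v
  proof -
    have "A6 ends F u v \<Longrightarrow> A6 ends F v u" unfolding A6_def by metis
    then show ?thesis using h B8_sym by blast
  qed
  have Fn: "v = w" if "u \<in> GP_verts X ends F" "v \<in> GP_verts X ends F" "w \<in> GP_verts X ends F"
    "u \<noteq> v \<and> (A6 ends F u v \<or> B8 ends F u v)" "u \<noteq> w \<and> (A6 ends F u w \<or> B8 ends F u w)" for u v w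
    using fun1 that by blast
  show ?thesis unfolding mt_def using S Fn by blast
qed

lemma mt2: "mt (GP_verts X ends F) (\<lambda>x y. x \<noteq> y \<and> Cq E ends F x y)"
proof -
  have S: "(v \<noteq> u \<and> Cq E ends F v u) \<and> u \<noteq> v" if h: "u \<noteq> v \<and> Cq E ends F u v" for u v
    using h unfolding Cq_def by auto
  have Fn: "v = w" if h1: "u \<noteq> v \<and> Cq E ends F u v" and h2: "u \<noteq> w \<and> Cq E ends F u w" for u v w
  proof (rule ccontr)
    assume vw: "v \<noteq> w"
    define S where "S = {t \<in> comp ends (E - F) u. deg ends (E - F) t = 1}"
    have finQ: "finite (E - F)" using finE by simp
    have cS: "card S \<le> 2" unfolding S_def using leaves[OF finQ noloopQ] degQ by blast
    have fS: "finite S" unfolding S_def using fin_deg_pos[OF finQ, of ends] by (rule rev_finite_subset) auto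
    have "u \<in> S" "v \<in> S" "w \<in> S" using h1 h2 comp_self[of u ends "E - F"] comp_self[of v ends "E - F"]
        comp_self[of w ends "E - F"] unfolding S_def Cq_def by auto
    then have "{u, v, w} \<subseteq> S" by blast
    then have "card {u, v, w} \<le> card S" using fS by (simp add: card_mono)
    moreover have "card {u, v, w} = 3" using h1 h2 vw by auto
    ultimately show False using cS by simp
  qed
  show ?thesis unfolding mt_def using S Fn by blast
qed

lemma main_ctx: "bipartite_on (GP_verts X ends F) (GP_adj X E ends F)"
proof -
  have fV: "finite (GP_verts X ends F)" using finX unfolding GP_verts_def by simp
  have b: "bipartite_on (GP_verts X ends F) (\<lambda>u v. (u \<noteq> v \<and> (A6 ends F u v \<or> B8 ends F u v)) \<or> (u \<noteq> v \<and> Cq E ends F u v))"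
    using bip_match[OF fV mt1 mt2] .
  have alt: "GP_adj X E ends F u v = (u \<in> GP_verts X ends F \<and> v \<in> GP_verts X ends F \<and> u \<noteq> v \<and>
      (A6 ends F u v \<or> B8 ends F u v \<or> Cq E ends F u v))" for u v
    by (simp only: GP_adj_def A6_def B8_def Cq_def)
  have imp: "(u \<noteq> v \<and> (A6 ends F u v \<or> B8 ends F u v)) \<or> (u \<noteq> v \<and> Cq E ends F u v)"
    if "GP_adj X E ends F u v" for u v
  proof -
    have "u \<noteq> v" "A6 ends F u v \<or> B8 ends F u v \<or> Cq E ends F u v" using that alt by simp_all
    then show ?thesis by blast
  qed
  show ?thesis by (rule bip_mono[OF b imp])
qed
end

theorem mainTheorem1:
  fixes X Y :: "'v set" and E F :: "'e set" and ends :: "'e \<Rightarrow> 'v \<times> 'v"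
  assumes "biregular34 X Y E ends"
    and "proper_path_factor X Y E ends F"
  shows "bipartite_on (GP_verts X ends F) (GP_adj X E ends F)"
  using main_ctx[OF assms] .

end
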